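(* Let $k,\ell\ge 1$ and let $R=[0,\ell]\times[0,k]$. Consider partially directed walks on $\mathbb Z^2$ (self-avoiding walks using only North $(0,1)$, East $(1,0)$ and South $(0,-1)$ unit steps) that start at $(0,0)$, stay in $R$, and end at $(\ell,k)$. Such a walk is generated by the following random procedure: starting from $(0,0)$, at each time one chooses uniformly at random one of the eligible steps, where a step (N, E or S) is eligible if, once appended to the current walk, it gives a self-avoiding N/E/S walk staying in $R$ that can be extended by N/E/S steps into such a walk ending at $(\ell,k)$; the procedure stops on reaching $(\ell,k)$. Let $p(w_0)$ denote the probability of obtaining the walk $w_0$. Write $w_0=w\,\mathsf E\,\mathsf N\cdots\mathsf N$, i.e. $w$ is the prefix of $w_0$ preceding its last East step (heights measured from the bottom side $y=0$). Then $$\frac1{p(w_0)}=2\cdot 3^{h(w)}\,2^{h_c(w)}\,2^{v(w)}\,1^{v_c(w)},$$ where $h(w)$ is the number of horizontal steps of $w$ lying neither at height $0$ nor at height $k$; $h_c(w)$ is the number of horizontal steps of $w$ lying at height $0$ or $k$; $v(w)$ is the number of vertical steps of $w$ ending neither at height $0$ nor at height $k$; and $v_c(w)$ is the number of vertical steps of $w$ ending at height $0$ or $k$. *)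

theory Defs
  imports Complex_Main
begin

datatype step = N | E | S

fun delta :: "step \<Rightarrow> int \<times> int" where
  "delta N = (0, 1)"
| "delta E = (1, 0)"
| "delta S = (0, -1)"

definition endpt :: "step list \<Rightarrow> int \<times> int" where
  "endpt ws = (sum_list (map (fst \<circ> delta) ws), sum_list (map (snd \<circ> delta) ws))"

definition vertices :: "step list \<Rightarrow> (int \<times> int) list" where
  "vertices ws = map (\<lambda>i. endpt (take i ws)) [0..<Suc (length ws)]"

definition self_avoiding :: "step list \<Rightarrow> bool" where
  "self_avoiding ws \<longleftrightarrow> distinct (vertices ws)"

definition in_rect :: "int \<Rightarrow> int \<Rightarrow> step list \<Rightarrow> bool" where
  "in_rect l k ws \<longleftrightarrow> set (vertices ws) \<subseteq> {0..l} \<times> {0..k}"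

definition admissible :: "int \<Rightarrow> int \<Rightarrow> step list \<Rightarrow> bool" where
  "admissible l k ws \<longleftrightarrow> self_avoiding ws \<and> in_rect l k ws"

definition complete_walk :: "int \<Rightarrow> int \<Rightarrow> step list \<Rightarrow> bool" where
  "complete_walk l k ws \<longleftrightarrow> admissible l k ws \<and> endpt ws = (l, k)"

definition eligible :: "int \<Rightarrow> int \<Rightarrow> step list \<Rightarrow> step set" where
  "eligible l k u = {s. \<exists>v. complete_walk l k (u @ [s] @ v)}"

definition prob_walk :: "int \<Rightarrow> int \<Rightarrow> step list \<Rightarrow> real" where
  "prob_walk l k w0 = (\<Prod>i<length w0. 1 / real (card (eligible l k (take i w0))))"

definition h_stat :: "int \<Rightarrow> step list \<Rightarrow> nat" where
  "h_stat k w = card {i. i < length w \<and> w ! i = E \<and> snd (endpt (take i w)) \<notin> {0, k}}"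

definition hc_stat :: "int \<Rightarrow> step list \<Rightarrow> nat" where
  "hc_stat k w = card {i. i < length w \<and> w ! i = E \<and> snd (endpt (take i w)) \<in> {0, k}}"

definition v_stat :: "int \<Rightarrow> step list \<Rightarrow> nat" where
  "v_stat k w = card {i. i < length w \<and> w ! i \<noteq> E \<and> snd (endpt (take (Suc i) w)) \<notin> {0, k}}"

definition vc_stat :: "int \<Rightarrow> step list \<Rightarrow> nat" where
  "vc_stat k w = card {i. i < length w \<and> w ! i \<noteq> E \<and> snd (endpt (take (Suc i) w)) \<in> {0, k}}"

end

theory Submission imports Defs begin

lemma endpt_Nil[simp]: "endpt [] = (0,0)" by (simp add: endpt_def)
lemma endpt_append: "endpt (a @ b) = (fst (endpt a) + fst (endpt b), snd (endpt a) + snd (endpt b))"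
  by (simp add: endpt_def)
lemma endpt_Cons: "endpt (s # b) = (fst (delta s) + fst (endpt b), snd (delta s) + snd (endpt b))"
  by (simp add: endpt_def)
lemma endpt_snoc: "endpt (a @ [s]) = (fst (endpt a) + fst (delta s), snd (endpt a) + snd (delta s))"
  by (simp add: endpt_def)
lemma endpt_repN[simp]: "endpt (replicate n N) = (0, int n)"
  by (induction n) (auto simp: endpt_Cons)
lemma endpt_repE[simp]: "endpt (replicate n E) = (int n, 0)"
  by (induction n) (auto simp: endpt_Cons)

lemma length_vertices[simp]: "length (vertices ws) = Suc (length ws)"
  by (simp add: vertices_def)
lemma vertices_nth: "i \<le> length ws \<Longrightarrow> vertices ws ! i = endpt (take i ws)"
  unfolding vertices_def by (simp del: upt_Suc add: nth_map_upt)
lemma vertices_Nil[simp]: "vertices [] = [(0,0)]"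
  by (simp add: vertices_def)
lemma vertices_snoc: "vertices (u @ [s]) = vertices u @ [endpt (u @ [s])]"
proof -
  have "vertices (u @ [s]) = map (\<lambda>i. endpt (take i (u @ [s]))) ([0..<Suc (length u)] @ [Suc (length u)])"
    by (simp add: vertices_def)
  also have "\<dots> = vertices u @ [endpt (u @ [s])]"
    unfolding vertices_def by (auto simp del: upt_Suc)
  finally show ?thesis .
qed
lemma endpt_in_vertices: "endpt u \<in> set (vertices u)"
  by (cases u rule: rev_cases) (auto simp: vertices_snoc)
lemma vertices_prefix: "\<exists>r. vertices (a @ b) = vertices a @ r"
proof (induction b rule: rev_induct)
  case Nil then show ?case by simp
next
  case (snoc x xs)
  then obtain r where "vertices (a @ xs) = vertices a @ r" by blast
  then show ?case using vertices_snoc[of "a @ xs" x] by auto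
qed
lemma sa_prefix: "self_avoiding (a @ b) \<Longrightarrow> self_avoiding a"
  using vertices_prefix[of a b] by (auto simp: self_avoiding_def)
lemma adm_prefix: "admissible l k (a @ b) \<Longrightarrow> admissible l k a"
  using vertices_prefix[of a b] by (auto simp: admissible_def self_avoiding_def in_rect_def)


definition shift :: "int \<times> int \<Rightarrow> int \<times> int \<Rightarrow> int \<times> int" where
  "shift q p = (fst q + fst p, snd q + snd p)"

lemma vertices_append: "vertices (u @ t) = vertices u @ map (shift (endpt u)) (tl (vertices t))"
proof (induction t rule: rev_induct)
  case Nil then show ?case by simp
next
  case (snoc s t)
  have ne: "vertices t \<noteq> []" by (metis length_vertices list.size(3) nat.distinct(1))
  have "vertices (u @ t @ [s]) = vertices (u @ t) @ [endpt (u @ t @ [s])]"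
    using vertices_snoc[of "u @ t" s] by simp
  also have "\<dots> = vertices u @ map (shift (endpt u)) (tl (vertices t)) @ [shift (endpt u) (endpt (t @ [s]))]"
    using snoc by (simp add: shift_def endpt_append)
  also have "\<dots> = vertices u @ map (shift (endpt u)) (tl (vertices (t @ [s])))"
    using ne by (simp add: vertices_snoc)
  finally show ?case .
qed

lemma fst_delta_nonneg: "fst (delta s) \<ge> 0" by (cases s) auto

lemma fst_endpt_nonneg': "fst (endpt t) \<ge> 0"
proof (induction t)
  case (Cons a t) then show ?case using fst_delta_nonneg[of a] by (simp add: endpt_Cons)
qed simp

lemma fst_endpt_E: "E \<in> set t \<Longrightarrow> fst (endpt t) \<ge> 1"
proof (induction t)
  case (Cons a t) then show ?case using fst_delta_nonneg[of a] fst_endpt_nonneg'[of t]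
    by (cases a) (auto simp: endpt_Cons)
qed simp

lemma fst_prefix_le: "fst (endpt (take i t)) \<le> fst (endpt t)"
  using endpt_append[of "take i t" "drop i t"] fst_endpt_nonneg'[of "drop i t"] by simp

lemma set_vertices: "set (vertices t) = {endpt (take i t) | i. i \<le> length t}"
  unfolding vertices_def by (auto simp del: upt_Suc simp: less_Suc_eq_le)

lemma vertices_fst_le: "p \<in> set (vertices t) \<Longrightarrow> fst p \<le> fst (endpt t)"
  using fst_prefix_le by (auto simp: set_vertices)

lemma noS_endpt: "S \<notin> set t \<Longrightarrow> fst (endpt t) \<ge> 0 \<and> snd (endpt t) \<ge> 0 \<and> fst (endpt t) + snd (endpt t) = int (length t)"
proof (induction t)
  case (Cons a t) then show ?case by (cases a) (auto simp: endpt_Cons)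
qed simp

lemma noS_distinct: assumes "S \<notin> set t" shows "distinct (vertices t)"
proof -
  have "map (\<lambda>p. fst p + snd p) (vertices t) = map int [0..<Suc (length t)]"
    unfolding vertices_def map_map
  proof (rule map_cong[OF refl])
    fix x assume "x \<in> set [0..<Suc (length t)]"
    then have "x \<le> length t" by auto
    moreover have "S \<notin> set (take x t)" using assms by (auto dest: in_set_takeD)
    ultimately show "((\<lambda>p. fst p + snd p) \<circ> (\<lambda>i. endpt (take i t))) x = int x"
      using noS_endpt[of "take x t"] by simp
  qed
  then have "distinct (map (\<lambda>p. fst p + snd p) (vertices t))"
    by (simp add: distinct_map inj_on_def del: upt_Suc)
  then show ?thesis using distinct_map by blast
qed

lemma noS_bounds: assumes "S \<notin> set t" "p \<in> set (vertices t)"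
  shows "0 \<le> fst p \<and> fst p \<le> fst (endpt t) \<and> 0 \<le> snd p \<and> snd p \<le> snd (endpt t)"
proof -
  obtain i where p: "p = endpt (take i t)" using assms(2) by (auto simp: set_vertices)
  have a: "S \<notin> set (take i t)" "S \<notin> set (drop i t)" using assms(1) by (auto dest: in_set_takeD in_set_dropD)
  show ?thesis using endpt_append[of "take i t" "drop i t"] noS_endpt[OF a(1)] noS_endpt[OF a(2)] p by simp
qed

lemma tl_vertices_fst: assumes "p \<in> set (tl (vertices (E # t)))" shows "fst p \<ge> 1"
proof -
  obtain j where j: "j < length (tl (vertices (E # t)))" "p = tl (vertices (E # t)) ! j"
    using assms by (metis in_set_conv_nth)
  then have "p = endpt (take (Suc j) (E # t))" by (simp add: nth_tl vertices_nth)
  then have "p = endpt (E # take j t)" by simp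
  then show ?thesis using fst_endpt_nonneg'[of "take j t"] by (simp add: endpt_Cons)
qed

lemma append_complete:
  assumes adm: "admissible l k u" and eu: "endpt u = (x, y)" and noS: "S \<notin> set t'"
    and ex: "x + fst (endpt (E # t')) = l" and ey: "y + snd (endpt (E # t')) = k"
  shows "complete_walk l k (u @ E # t')"
proof -
  let ?t = "E # t'"
  have noS': "S \<notin> set ?t" using noS by simp
  have xy: "0 \<le> x \<and> x \<le> l \<and> 0 \<le> y \<and> y \<le> k"
    using adm endpt_in_vertices[of u] eu by (auto simp: admissible_def in_rect_def)
  have rect: "set (vertices (u @ ?t)) \<subseteq> {0..l} \<times> {0..k}"
  proof -
    have "shift (x, y) p \<in> {0..l} \<times> {0..k}" if "p \<in> set (tl (vertices ?t))" for p
    proof -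
      have "vertices ?t \<noteq> []" by (metis length_vertices list.size(3) nat.distinct(1))
      then have "p \<in> set (vertices ?t)" using that by (meson list.set_sel(2))
      then show ?thesis using noS_bounds[OF noS'] xy ex ey by (fastforce simp: shift_def)
    qed
    then show ?thesis using adm eu unfolding vertices_append set_append set_map Un_subset_iff image_subset_iff
      by (simp add: admissible_def in_rect_def)
  qed
  have dist: "distinct (vertices (u @ ?t))"
  proof -
    have d1: "distinct (vertices u)" using adm by (simp add: admissible_def self_avoiding_def)
    have d2: "distinct (map (shift (x,y)) (tl (vertices ?t)))"
      using noS_distinct[OF noS'] by (auto simp: distinct_map distinct_tl inj_on_def shift_def)
    have d3: "set (vertices u) \<inter> set (map (shift (x,y)) (tl (vertices ?t))) = {}"
    proof -
      { fix p q assume "q \<in> set (vertices u)" "p \<in> set (tl (vertices ?t))" "q = shift (x,y) p"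
        then have False using vertices_fst_le[of q u] tl_vertices_fst[of p t'] eu by (auto simp: shift_def) }
      then show ?thesis by auto
    qed
    show ?thesis using d1 d2 d3 eu by (simp add: vertices_append)
  qed
  have "endpt (u @ ?t) = (l, k)" using eu ex ey by (simp add: endpt_append)
  then show ?thesis using rect dist by (simp add: complete_walk_def admissible_def self_avoiding_def in_rect_def)
qed


lemma not_sa_SN: "\<not> self_avoiding (a @ [S, N] @ b)"
proof
  assume "self_avoiding (a @ [S, N] @ b)"
  then have "self_avoiding ((a @ [S]) @ [N])" using sa_prefix[of "a @ [S, N]" b] by simp
  moreover have "vertices ((a @ [S]) @ [N]) = vertices a @ [endpt (a @ [S]), endpt a]"
    using vertices_snoc[of "a @ [S]" N] vertices_snoc[of a S] endpt_snoc[of "a @ [S]" N] endpt_snoc[of a S]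
    by simp
  ultimately show False using endpt_in_vertices[of a] by (simp add: self_avoiding_def)
qed

lemma not_sa_NS: "\<not> self_avoiding (a @ [N, S] @ b)"
proof
  assume "self_avoiding (a @ [N, S] @ b)"
  then have "self_avoiding ((a @ [N]) @ [S])" using sa_prefix[of "a @ [N, S]" b] by simp
  moreover have "vertices ((a @ [N]) @ [S]) = vertices a @ [endpt (a @ [N]), endpt a]"
    using vertices_snoc[of "a @ [N]" S] vertices_snoc[of a N] endpt_snoc[of "a @ [N]" S] endpt_snoc[of a N]
    by simp
  ultimately show False using endpt_in_vertices[of a] by (simp add: self_avoiding_def)
qed

lemma column_inv:
  "self_avoiding u \<Longrightarrow> p \<in> set (vertices u) \<Longrightarrow> fst p = fst (endpt u) \<Longrightarrow>
    ((u = [] \<or> last u \<noteq> S) \<longrightarrow> snd p \<le> snd (endpt u)) \<and>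
    ((u = [] \<or> last u \<noteq> N) \<longrightarrow> snd p \<ge> snd (endpt u))"
proof (induction u arbitrary: p rule: rev_induct)
  case Nil then show ?case by simp
next
  case (snoc s u)
  have sau: "self_avoiding u" using snoc.prems(1) sa_prefix by blast
  show ?case
  proof (cases "p = endpt (u @ [s])")
    case True then show ?thesis by simp
  next
    case False
    then have pu: "p \<in> set (vertices u)" using snoc.prems(2) by (simp add: vertices_snoc)
    have fle: "fst p \<le> fst (endpt u)" using vertices_fst_le[OF pu] .
    show ?thesis
    proof (cases s)
      case E then show ?thesis using snoc.prems(3) fle by (simp add: endpt_snoc)
    next
      case N
      have "u = [] \<or> last u \<noteq> S"
      proof (rule ccontr)
        assume "\<not> (u = [] \<or> last u \<noteq> S)"
        then have "u = butlast u @ [S]" by (metis append_butlast_last_id)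
        then have "u @ [s] = butlast u @ [S, N] @ []" using N by (metis append.assoc append_Cons append_Nil)
        then show False using snoc.prems(1) not_sa_SN by metis
      qed
      then have "snd p \<le> snd (endpt u)" using snoc.IH[OF sau pu] snoc.prems(3) N by (simp add: endpt_snoc)
      then show ?thesis using N by (simp add: endpt_snoc)
    next
      case S
      have "u = [] \<or> last u \<noteq> N"
      proof (rule ccontr)
        assume "\<not> (u = [] \<or> last u \<noteq> N)"
        then have "u = butlast u @ [N]" by (metis append_butlast_last_id)
        then have "u @ [s] = butlast u @ [N, S] @ []" using S by (metis append.assoc append_Cons append_Nil)
        then show False using snoc.prems(1) not_sa_NS by metis
      qed
      then have "snd p \<ge> snd (endpt u)" using snoc.IH[OF sau pu] snoc.prems(3) S by (simp add: endpt_snoc)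
      then show ?thesis using S by (simp add: endpt_snoc)
    qed
  qed
qed

lemma noN_after_S: "self_avoiding (a @ [S] @ v) \<Longrightarrow> E \<notin> set v \<Longrightarrow> N \<notin> set v"
proof (induction v arbitrary: a)
  case Nil then show ?case by simp
next
  case (Cons s v)
  show ?case
  proof (cases s)
    case N then show ?thesis using Cons.prems(1) not_sa_SN[of a v] by simp
  next
    case E then show ?thesis using Cons.prems(2) by simp
  next
    case S
    then have "self_avoiding ((a @ [S]) @ [S] @ v)" using Cons.prems(1) by simp
    then show ?thesis using Cons.IH[of "a @ [S]"] Cons.prems(2) S by simp
  qed
qed

lemma snd_noN: "N \<notin> set v \<Longrightarrow> snd (endpt v) \<le> 0"
proof (induction v)
  case (Cons a v) then show ?case by (cases a) (auto simp: endpt_Cons)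
qed simp

lemma no_S_last_col:
  assumes "complete_walk l k (u @ [S] @ v)" "fst (endpt u) = l" "snd (endpt u) \<le> k"
  shows False
proof -
  have e: "endpt (u @ [S] @ v) = (l, k)" using assms(1) by (simp add: complete_walk_def)
  then have "fst (endpt v) = 0" using assms(2) by (simp add: endpt_append endpt_Cons)
  then have nE: "E \<notin> set v" using fst_endpt_E by fastforce
  have "self_avoiding (u @ [S] @ v)" using assms(1) by (simp add: complete_walk_def admissible_def)
  then have "N \<notin> set v" using noN_after_S nE by blast
  then have "snd (endpt v) \<le> 0" by (rule snd_noN)
  then show False using e assms(3) by (simp add: endpt_append endpt_Cons)
qed


lemma adm_xy: "admissible l k u \<Longrightarrow> endpt u = (x, y) \<Longrightarrow> 0 \<le> x \<and> x \<le> l \<and> 0 \<le> y \<and> y \<le> k"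
  using endpt_in_vertices[of u] by (auto simp: admissible_def in_rect_def)

lemma adm_snocN:
  assumes "admissible l k u" "endpt u = (x, y)" "y < k" "u = [] \<or> last u \<noteq> S"
  shows "admissible l k (u @ [N])"
proof -
  have xy: "0 \<le> x \<and> x \<le> l \<and> 0 \<le> y \<and> y \<le> k" using adm_xy assms by blast
  have "(x, y + 1) \<notin> set (vertices u)"
  proof
    assume "(x, y + 1) \<in> set (vertices u)"
    then show False using column_inv[of u "(x, y+1)"] assms by (auto simp: admissible_def)
  qed
  then show ?thesis using assms xy
    by (auto simp: admissible_def self_avoiding_def in_rect_def vertices_snoc endpt_snoc)
qed

lemma adm_snocS:
  assumes "admissible l k u" "endpt u = (x, y)" "0 < y" "u = [] \<or> last u \<noteq> N"
  shows "admissible l k (u @ [S])"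
proof -
  have xy: "0 \<le> x \<and> x \<le> l \<and> 0 \<le> y \<and> y \<le> k" using adm_xy assms by blast
  have "(x, y - 1) \<notin> set (vertices u)"
  proof
    assume "(x, y - 1) \<in> set (vertices u)"
    then show False using column_inv[of u "(x, y - 1)"] assms by (auto simp: admissible_def)
  qed
  then show ?thesis using assms xy
    by (auto simp: admissible_def self_avoiding_def in_rect_def vertices_snoc endpt_snoc)
qed

lemma complete_E:
  assumes "admissible l k u" "endpt u = (x, y)" "x < l"
  shows "complete_walk l k (u @ [E] @ (replicate (nat (k - y)) N @ replicate (nat (l - x - 1)) E))"
proof -
  have xy: "0 \<le> x \<and> x \<le> l \<and> 0 \<le> y \<and> y \<le> k" using adm_xy assms by blast
  show ?thesis using append_complete[OF assms(1,2), of "replicate (nat (k - y)) N @ replicate (nat (l - x - 1)) E"]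
    xy assms(3) by (simp add: endpt_Cons endpt_append)
qed

lemma elig_lt:
  assumes adm: "admissible l k u" and eu: "endpt u = (x, y)" and xl: "x < l"
  shows "eligible l k u = insert E ((if y < k \<and> (u = [] \<or> last u \<noteq> S) then {N} else {}) \<union>
                                   (if 0 < y \<and> (u = [] \<or> last u \<noteq> N) then {S} else {}))"
proof (rule set_eqI)
  fix s
  have xy: "0 \<le> x \<and> x \<le> l \<and> 0 \<le> y \<and> y \<le> k" using adm_xy adm eu by blast
  show "s \<in> eligible l k u \<longleftrightarrow> s \<in> insert E ((if y < k \<and> (u = [] \<or> last u \<noteq> S) then {N} else {}) \<union>
                                   (if 0 < y \<and> (u = [] \<or> last u \<noteq> N) then {S} else {}))"
  proof
    assume "s \<in> eligible l k u"
    then obtain v where c: "complete_walk l k (u @ [s] @ v)" by (auto simp: eligible_def)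
    then have a1: "admissible l k (u @ [s])" using adm_prefix[of l k "u @ [s]" v]
      by (simp add: complete_walk_def)
    have sa: "self_avoiding (u @ [s] @ v)" using c by (simp add: complete_walk_def admissible_def)
    show "s \<in> insert E ((if y < k \<and> (u = [] \<or> last u \<noteq> S) then {N} else {}) \<union>
                                   (if 0 < y \<and> (u = [] \<or> last u \<noteq> N) then {S} else {}))"
    proof (cases s)
      case N
      have "y < k" using adm_xy[OF a1, of x "y + 1"] N eu by (simp add: endpt_snoc)
      moreover have "u = [] \<or> last u \<noteq> S"
      proof (rule ccontr)
        assume "\<not> (u = [] \<or> last u \<noteq> S)"
        then have "u = butlast u @ [S]" by (metis append_butlast_last_id)
        then have "u @ [s] @ v = butlast u @ [S, N] @ v" using N by (metis append.assoc append_Cons append_Nil)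
        then show False using sa not_sa_SN by metis
      qed
      ultimately show ?thesis using N by simp
    next
      case S
      have "0 < y" using adm_xy[OF a1, of x "y - 1"] S eu by (simp add: endpt_snoc)
      moreover have "u = [] \<or> last u \<noteq> N"
      proof (rule ccontr)
        assume "\<not> (u = [] \<or> last u \<noteq> N)"
        then have "u = butlast u @ [N]" by (metis append_butlast_last_id)
        then have "u @ [s] @ v = butlast u @ [N, S] @ v" using S by (metis append.assoc append_Cons append_Nil)
        then show False using sa not_sa_NS by metis
      qed
      ultimately show ?thesis using S by simp
    qed simp
  next
    assume m: "s \<in> insert E ((if y < k \<and> (u = [] \<or> last u \<noteq> S) then {N} else {}) \<union>
                                   (if 0 < y \<and> (u = [] \<or> last u \<noteq> N) then {S} else {}))"
    show "s \<in> eligible l k u"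
    proof (cases s)
      case E then show ?thesis using complete_E[OF adm eu xl] by (auto simp: eligible_def)
    next
      case N
      then have c: "y < k" "u = [] \<or> last u \<noteq> S" using m by (auto split: if_splits)
      have a: "admissible l k (u @ [N])" by (rule adm_snocN[OF adm eu c])
      have "endpt (u @ [N]) = (x, y + 1)" using eu by (simp add: endpt_snoc)
      from complete_E[OF a this xl] show ?thesis using N by (auto simp: eligible_def)
    next
      case S
      then have c: "0 < y" "u = [] \<or> last u \<noteq> N" using m by (auto split: if_splits)
      have a: "admissible l k (u @ [S])" by (rule adm_snocS[OF adm eu c])
      have "endpt (u @ [S]) = (x, y - 1)" using eu by (simp add: endpt_snoc)
      from complete_E[OF a this xl] show ?thesis using S by (auto simp: eligible_def)
    qed
  qed
qed

lemma elig_last: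
  assumes adm: "admissible l k u" and eu: "endpt u = (l, y)" and c: "complete_walk l k (u @ [N] @ v)"
  shows "eligible l k u = {N}"
proof -
  have xy: "y \<le> k" using adm_xy adm eu by blast
  { fix s assume "s \<in> eligible l k u"
    then obtain v' where c': "complete_walk l k (u @ [s] @ v')" by (auto simp: eligible_def)
    then have a1: "admissible l k (u @ [s])" using adm_prefix[of l k "u @ [s]" v']
      by (simp add: complete_walk_def)
    have "s = N"
    proof (cases s)
      case E then show ?thesis using adm_xy[OF a1, of "l + 1" y] eu by (simp add: endpt_snoc)
    next
      case S then show ?thesis using no_S_last_col[of l k u v'] c' eu xy by simp
    qed simp }
  moreover have "N \<in> eligible l k u" using c by (auto simp: eligible_def)
  ultimately show ?thesis by blast
qed


lemma prod_split_add: "(\<Prod>i<n + m. f i) = (\<Prod>i<n. f i) * (\<Prod>i<m. f (n + i))" for f :: "nat \<Rightarrow> nat"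
  by (induction m) (simp_all add: mult.assoc)

lemma prod_indicator: "A \<subseteq> {..<n} \<Longrightarrow> (\<Prod>j<n. if j \<in> A then c else 1) = c ^ card A" for c n :: nat
proof -
  assume "A \<subseteq> {..<n}"
  then have "{..<n} \<inter> {j. j \<in> A} = A" by auto
  moreover have "(\<Prod>j<n. if j \<in> A then c else 1) = prod (\<lambda>_. c) ({..<n} \<inter> {j. j \<in> A}) * prod (\<lambda>_. 1) ({..<n} \<inter> - {j. j \<in> A})"
    by (rule prod.If_cases) simp
  ultimately show ?thesis by simp
qed

theorem lemma2p1:
  fixes l k :: int and w0 w :: "step list" and m :: nat
  assumes "l \<ge> 1" and "k \<ge> 1"
    and "complete_walk l k w0"
    and "w0 = w @ [E] @ replicate m N"
  shows "1 / prob_walk l k w0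
           = 2 * 3 ^ h_stat k w * 2 ^ hc_stat k w * 2 ^ v_stat k w * 1 ^ vc_stat k w"
proof -
  define n where "n = length w"
  define c where "c i = card (eligible l k (take i w0))" for i
  have adm0: "admissible l k w0" and ew0: "endpt w0 = (l, k)" using assms(3) by (auto simp: complete_walk_def)
  have admt: "admissible l k (take i w0)" for i using adm_prefix[of l k "take i w0" "drop i w0"] adm0 by simp
  have ew: "endpt w = (l - 1, k - int m)" using ew0 assms(4) by (cases "endpt w") (simp add: endpt_append endpt_Cons)
  have len: "length w0 = Suc (n + m)" using assms(4) n_def by simp
  have c0: "c 0 = 2"
  proof -
    have "eligible l k [] = insert E {N}" using elig_lt[of l k "[]" 0 0] admt[of 0] assms(1,2) by simp
    then show ?thesis unfolding c_def by simp
  qed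
  have cfin: "c (Suc (n + t)) = 1" if t: "t < m" for t
  proof -
    let ?u = "w @ [E] @ replicate t N"
    have tk: "take (Suc (n + t)) w0 = ?u" using assms(4) n_def t
      by (simp add: take_add[of "Suc n"] take_replicate[of t m N]) 
    have w0': "w0 = ?u @ [N] @ replicate (m - t - 1) N"
    proof -
      have "replicate m N = replicate t N @ [N] @ replicate (m - t - 1) N"
        using t by (simp add: replicate_add[symmetric] flip: replicate_Suc)
      then show ?thesis using assms(4) by simp
    qed
    have eu: "endpt ?u = (l, k - int m + int t)" using ew by (simp add: endpt_append endpt_Cons)
    have "eligible l k ?u = {N}"
      using elig_last[OF _ eu, where v="replicate (m - t - 1) N"] admt[of "Suc (n + t)"] tk assms(3) w0' by simp
    then show ?thesis unfolding c_def tk by simp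
  qed
  define H where "H = {i. i < length w \<and> w ! i = E \<and> snd (endpt (take i w)) \<notin> {0, k}}"
  define Hc where "Hc = {i. i < length w \<and> w ! i = E \<and> snd (endpt (take i w)) \<in> {0, k}}"
  define V where "V = {i. i < length w \<and> w ! i \<noteq> E \<and> snd (endpt (take (Suc i) w)) \<notin> {0, k}}"
  have cmid: "c (Suc j) = (if j \<in> H then 3 else 1) * (if j \<in> Hc then 2 else 1) * (if j \<in> V then 2 else 1)"
    if j: "j < n" for j
  proof -
    let ?a = "take j w" and ?s = "w ! j"
    have tw: "take (Suc j) w = ?a @ [?s]" using j n_def by (simp add: take_Suc_conv_app_nth)
    have tk: "take (Suc j) w0 = ?a @ [?s]" using j n_def assms(4) tw by simp
    have tk0: "take j w0 = ?a" using j n_def assms(4) by simp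
    obtain x0 y0 where e0: "endpt ?a = (x0, y0)" by fastforce
    have y0: "0 \<le> y0 \<and> y0 \<le> k" using adm_xy[OF admt[of j]] tk0 e0 by auto
    obtain x y where eu: "endpt (?a @ [?s]) = (x, y)" by fastforce
    have yy: "y = y0 + snd (delta ?s)" using eu e0 by (simp add: endpt_snoc)
    have yk: "0 \<le> y \<and> y \<le> k" using adm_xy[OF admt[of "Suc j"]] tk eu by auto
    have "x \<le> l - 1" using fst_prefix_le[of "Suc j" w] tw eu ew by simp
    then have xl: "x < l" by simp
    have el: "eligible l k (?a @ [?s]) = insert E ((if y < k \<and> ?s \<noteq> S then {N} else {}) \<union>
                                   (if 0 < y \<and> ?s \<noteq> N then {S} else {}))"
      using elig_lt[OF _ eu xl] admt[of "Suc j"] tk by simp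
    have memb: "(j \<in> H \<longleftrightarrow> ?s = E \<and> y0 \<notin> {0, k}) \<and> (j \<in> Hc \<longleftrightarrow> ?s = E \<and> y0 \<in> {0, k})
        \<and> (j \<in> V \<longleftrightarrow> ?s \<noteq> E \<and> y \<notin> {0, k})"
      using j n_def e0 eu tw unfolding H_def Hc_def V_def by simp
    show ?thesis
    proof (cases ?s)
      case E then show ?thesis unfolding c_def tk el using memb yy y0 yk assms(2) by (auto simp: card_insert_if)
    next
      case N then show ?thesis unfolding c_def tk el using memb yy y0 yk assms(2) by (auto simp: card_insert_if)
    next
      case S then show ?thesis unfolding c_def tk el using memb yy y0 yk assms(2) by (auto simp: card_insert_if)
    qed
  qed
  have "(\<Prod>i<length w0. c i) = 2 * 3 ^ card H * 2 ^ card Hc * 2 ^ card V"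
  proof -
    have "(\<Prod>i<length w0. c i) = c 0 * ((\<Prod>j<n. c (Suc j)) * (\<Prod>t<m. c (Suc (n + t))))"
      unfolding len prod.lessThan_Suc_shift prod_split_add by simp
    also have "(\<Prod>t<m. c (Suc (n + t))) = 1" using cfin by simp
    also have "(\<Prod>j<n. c (Suc j)) = (\<Prod>j<n. (if j \<in> H then 3 else 1) * (if j \<in> Hc then 2 else 1) * (if j \<in> V then 2 else 1))"
      using cmid by simp
    also have "\<dots> = 3 ^ card H * 2 ^ card Hc * 2 ^ card V"
    proof -
      have "H \<subseteq> {..<n}" "Hc \<subseteq> {..<n}" "V \<subseteq> {..<n}" by (auto simp: H_def Hc_def V_def n_def)
      then show ?thesis unfolding prod.distrib by (simp add: prod_indicator)
    qed
    finally show ?thesis using c0 by simp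
  qed
  moreover have "prob_walk l k w0 = 1 / (\<Prod>i<length w0. real (c i))"
    unfolding prob_walk_def c_def using prod_dividef[of "\<lambda>_. 1::real" "\<lambda>i. real (card (eligible l k (take i w0)))"]
    by simp
  ultimately show ?thesis
    unfolding h_stat_def hc_stat_def v_stat_def H_def Hc_def V_def
    by (simp flip: of_nat_prod)
qed

end
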